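(* Let $U$ be a compatible basis transform of $\mathbb{R}^{\{-1,1\}^n}$. Then $\deg_U(f)=\deg(f)$ for every $f\in\mathbb{R}^{\{-1,1\}^n}$.
   Context: $\mathbb{R}^{\{-1,1\}^n}$ is the real vector space of all functions $\{-1,1\}^n\to\mathbb{R}$; each $f$ has a unique expansion $f=\sum_{S\subseteq[n]}\hat f(S)\chi_S$, $\chi_S(x)=\prod_{i\in S}x_i$, and $\deg(f)=\max\{|S|:\hat f(S)\ne0\}$. A basis transform is an invertible linear map $U$ on $\mathbb{R}^{\{-1,1\}^n}$; the degree of $f$ under $U$ is $\deg_U(f):=\max\{\deg(U^{-1}(\chi_S)):\hat f(S)\ne0\}$. $U$ is compatible if $\deg(U(\chi_S))=|S|$ for every $S\subseteq[n]$. *)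

theory Defs
  imports Complex_Main
begin

text \<open>Points of the cube {-1,1}^n are functions x :: nat => real with x i in {-1,1}
  for i < n and the normalisation x i = 1 for i >= n.\<close>

definition cube :: "nat \<Rightarrow> (nat \<Rightarrow> real) set" where
  "cube n = {x. (\<forall>i<n. x i = -1 \<or> x i = 1) \<and> (\<forall>i\<ge>n. x i = 1)}"

definition fspace :: "nat \<Rightarrow> ((nat \<Rightarrow> real) \<Rightarrow> real) set" where
  "fspace n = {f. \<forall>x. x \<notin> cube n \<longrightarrow> f x = 0}"

definition chi :: "nat \<Rightarrow> nat set \<Rightarrow> (nat \<Rightarrow> real) \<Rightarrow> real" where
  "chi n S = (\<lambda>x. if x \<in> cube n then (\<Prod>i\<in>S. x i) else 0)"

definition fourier :: "nat \<Rightarrow> ((nat \<Rightarrow> real) \<Rightarrow> real) \<Rightarrow> nat set \<Rightarrow> real" where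
  "fourier n f S = (\<Sum>x\<in>cube n. f x * chi n S x) / 2 ^ n"

text \<open>Degree; the zero function gets degree 0 by convention (max over {0}).\<close>
definition deg :: "nat \<Rightarrow> ((nat \<Rightarrow> real) \<Rightarrow> real) \<Rightarrow> nat" where
  "deg n f = Max ({card S | S. S \<subseteq> {..<n} \<and> fourier n f S \<noteq> 0} \<union> {0})"

definition basis_transform :: "nat \<Rightarrow> (((nat \<Rightarrow> real) \<Rightarrow> real) \<Rightarrow> ((nat \<Rightarrow> real) \<Rightarrow> real)) \<Rightarrow> bool" where
  "basis_transform n U \<longleftrightarrow>
     (\<forall>f\<in>fspace n. \<forall>g\<in>fspace n. U (\<lambda>x. f x + g x) = (\<lambda>x. U f x + U g x)) \<and>
     (\<forall>f\<in>fspace n. \<forall>c::real. U (\<lambda>x. c * f x) = (\<lambda>x. c * U f x)) \<and>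
     bij_betw U (fspace n) (fspace n)"

definition degU :: "nat \<Rightarrow> (((nat \<Rightarrow> real) \<Rightarrow> real) \<Rightarrow> ((nat \<Rightarrow> real) \<Rightarrow> real))
    \<Rightarrow> ((nat \<Rightarrow> real) \<Rightarrow> real) \<Rightarrow> nat" where
  "degU n U f = Max ({deg n (inv_into (fspace n) U (chi n S)) | S. S \<subseteq> {..<n} \<and> fourier n f S \<noteq> 0} \<union> {0})"

definition compatible :: "nat \<Rightarrow> (((nat \<Rightarrow> real) \<Rightarrow> real) \<Rightarrow> ((nat \<Rightarrow> real) \<Rightarrow> real)) \<Rightarrow> bool" where
  "compatible n U \<longleftrightarrow> (\<forall>S. S \<subseteq> {..<n} \<longrightarrow> deg n (U (chi n S)) = card S)"

end

theory Submission imports Defs "HOL-Library.Function_Algebras" begin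

lemma cube_0: "cube 0 = {\<lambda>_. 1}"
  by (auto simp: cube_def)

lemma cube_Suc: "cube (Suc n) = (\<lambda>(x,b). x(n:=b)) ` (cube n \<times> {-1,1})"
proof (rule set_eqI, rule iffI)
  fix y assume y: "y \<in> cube (Suc n)"
  have "y = (y(n:=1))(n := y n)" by simp
  moreover have "y(n:=1) \<in> cube n" using y by (auto simp: cube_def less_Suc_eq)
  moreover have "y n \<in> {-1,1}" using y by (auto simp: cube_def)
  ultimately show "y \<in> (\<lambda>(x,b). x(n:=b)) ` (cube n \<times> {-1,1})"
    by (intro image_eqI[of _ _ "(y(n:=1), y n)"]) auto
next
  fix y assume "y \<in> (\<lambda>(x,b). x(n:=b)) ` (cube n \<times> {-1,1})"
  then show "y \<in> cube (Suc n)" by (auto simp: cube_def less_Suc_eq)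
qed

lemma cube_Suc_inj: "inj_on (\<lambda>(x,b). x(n:=b)) (cube n \<times> {-1,1})"
proof (rule inj_onI, clarify)
  fix x b x' b' assume x: "x \<in> cube n" "x' \<in> cube n" and e: "x(n := b) = x'(n := b')"
  have "b = b'" using fun_cong[OF e, of n] by simp
  moreover have "x = x'"
  proof
    fix i show "x i = x' i"
      using fun_cong[OF e, of i] x by (cases "i = n") (auto simp: cube_def)
  qed
  ultimately show "x = x' \<and> b = b'" by simp
qed

lemma finite_cube: "finite (cube n)"
  by (induction n) (auto simp: cube_0 cube_Suc)

lemma cube_sum_prod:
  fixes g :: "nat \<Rightarrow> real \<Rightarrow> real"
  shows   "(\<Sum>x\<in>cube n. \<Prod>i<n. g i (x i)) = (\<Prod>i<n. g i (-1) + g i 1)"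
proof (induction n)
  case 0 then show ?case by (simp add: cube_0)
next
  case (Suc n)
  have "(\<Sum>x\<in>cube (Suc n). \<Prod>i<Suc n. g i (x i))
      = (\<Sum>p\<in>cube n \<times> {-1,1}. \<Prod>i<Suc n. g i (((\<lambda>(x,b). x(n:=b)) p) i))"
    by (simp only: cube_Suc sum.reindex[OF cube_Suc_inj] comp_def)
  also have "\<dots> = (\<Sum>x\<in>cube n. \<Sum>b\<in>{-1,1}. \<Prod>i<Suc n. g i ((x(n:=b)) i))"
    unfolding sum.cartesian_product by (rule sum.cong) auto
  also have "\<dots> = (\<Sum>x\<in>cube n. (\<Prod>i<n. g i (x i)) * (g n (-1) + g n 1))"
  proof (rule sum.cong[OF refl])
    fix x assume "x \<in> cube n"
    have "\<And>b. (\<Prod>i<Suc n. g i ((x(n:=b)) i)) = (\<Prod>i<n. g i (x i)) * g n b"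
    proof -
      fix b
      have "(\<Prod>i<n. g i ((x(n:=b)) i)) = (\<Prod>i<n. g i (x i))"
        by (rule prod.cong) auto
      then show "(\<Prod>i<Suc n. g i ((x(n:=b)) i)) = (\<Prod>i<n. g i (x i)) * g n b"
        by (simp add: prod.lessThan_Suc)
    qed
    then show "(\<Sum>b\<in>{-1,1}. \<Prod>i<Suc n. g i ((x(n:=b)) i)) = (\<Prod>i<n. g i (x i)) * (g n (-1) + g n 1)"
      by (simp add: algebra_simps)
  qed
  also have "\<dots> = (\<Prod>i<Suc n. g i (-1) + g i 1)"
    by (simp only: sum_distrib_right[symmetric] Suc.IH prod.lessThan_Suc)
  finally show ?case .
qed

lemma prod_restrict:
  fixes n :: nat
  assumes "A \<subseteq> {..<n}"
  shows "(\<Prod>i\<in>A. x i) = (\<Prod>i<n. if i \<in> A then x i else (1::real))"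
proof -
  have "(\<Prod>i<n. if i \<in> A then x i else (1::real)) = prod x ({..<n} \<inter> {i. i \<in> A}) * prod (\<lambda>_. 1) ({..<n} \<inter> - {i. i \<in> A})"
    using prod.If_cases[of "{..<n}" "\<lambda>i. i\<in>A" x "\<lambda>_. 1"] by simp
  also have "{..<n} \<inter> {i. i \<in> A} = A" using assms by blast
  finally show ?thesis by simp
qed

lemma fourier_chi:
  assumes "S \<subseteq> {..<n}" "T \<subseteq> {..<n}"
  shows "fourier n (chi n T) S = (if S = T then 1 else 0)"
proof -
  let ?g = "\<lambda>i b. (if i \<in> T then b else 1) * (if i \<in> S then b else (1::real))"
  have "(\<Sum>x\<in>cube n. chi n T x * chi n S x) = (\<Sum>x\<in>cube n. \<Prod>i<n. ?g i (x i))"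
  proof (rule sum.cong[OF refl])
    fix x assume "x \<in> cube n"
    then have "chi n T x * chi n S x = (\<Prod>i\<in>T. x i) * (\<Prod>i\<in>S. x i)" by (simp add: chi_def)
    also have "\<dots> = (\<Prod>i<n. if i \<in> T then x i else 1) * (\<Prod>i<n. if i \<in> S then x i else 1)"
      using prod_restrict[OF assms(1), of x] prod_restrict[OF assms(2), of x] by simp
    also have "\<dots> = (\<Prod>i<n. ?g i (x i))" by (simp add: prod.distrib)
    finally show "chi n T x * chi n S x = (\<Prod>i<n. ?g i (x i))" .
  qed
  also have "\<dots> = (\<Prod>i<n. ?g i (-1) + ?g i 1)" by (rule cube_sum_prod)
  also have "\<dots> = (if S = T then 2^n else 0)"
  proof (cases "S = T")
    case True
    have "\<And>i. ?g i (-1) + ?g i 1 = 2" using True by simp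
    then show ?thesis using True by simp
  next
    case False
    then obtain i where "i \<in> S \<longleftrightarrow> i \<notin> T" by blast
    moreover have "i < n" using assms calculation by blast
    ultimately have g0: "?g i (-1) + ?g i 1 = 0" by auto
    have "(\<Prod>i<n. ?g i (-1) + ?g i 1) = 0" 
      by (rule prod_zero[OF finite_lessThan], rule bexI[of _ i]) (use g0 \<open>i < n\<close> in auto)
    then show ?thesis using False by simp
  qed
  finally show ?thesis by (simp add: fourier_def)
qed


lemma sum_fun_apply: "(\<Sum>i\<in>A. h i) x = (\<Sum>i\<in>A. (h i x :: real))"
  by (induction A rule: infinite_finite_induct) (auto simp: plus_fun_def)

lemma chi_fspace: "chi n S \<in> fspace n"
  by (simp add: chi_def fspace_def)

lemma fourier_sum:
  "fourier n (\<Sum>T\<in>A. (\<lambda>x. c T * h T x)) S = (\<Sum>T\<in>A. c T * fourier n (h T) S)"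
  by (simp add: fourier_def sum_fun_apply sum_distrib_left sum_distrib_right sum_divide_distrib
      sum.swap[of _ A] mult.assoc)

lemma kernel_sum:
  assumes "x \<in> cube n" "y \<in> cube n"
  shows "(\<Sum>S\<in>Pow {..<n}. chi n S x * chi n S y) = (if x = y then 2^n else 0)"
proof -
  have "(\<Sum>S\<in>Pow {..<n}. chi n S x * chi n S y)
      = (\<Sum>S\<in>Pow {..<n}. (\<Prod>i\<in>S. x i * y i) * (\<Prod>i\<in>{..<n}-S. 1))"
    using assms by (simp add: chi_def prod.distrib)
  also have "\<dots> = (\<Prod>i<n. x i * y i + 1)"
    by (rule prod_add[symmetric]) simp
  also have "\<dots> = (if x = y then 2^n else 0)"
  proof (cases "x = y")
    case True
    have "\<And>i. i < n \<Longrightarrow> y i * y i + 1 = 2" using assms(2) by (auto simp: cube_def)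
    then show ?thesis using True by simp
  next
    case False
    then obtain i where i: "x i \<noteq> y i" by blast
    have cx: "\<forall>i<n. x i = -1 \<or> x i = 1" "\<forall>i\<ge>n. x i = 1" using assms(1) by (simp_all add: cube_def)
    have cy: "\<forall>i<n. y i = -1 \<or> y i = 1" "\<forall>i\<ge>n. y i = 1" using assms(2) by (simp_all add: cube_def)
    have "i < n" using cx(2) cy(2) i by (cases "i < n") auto
    then have "x i * y i + 1 = 0" using cx(1) cy(1) i by fastforce
    then have "(\<Prod>i<n. x i * y i + 1) = 0" using \<open>i < n\<close>
      by (intro prod_zero) auto
    then show ?thesis using False by simp
  qed
  finally show ?thesis .
qed

lemma expansion:
  assumes "f \<in> fspace n"
  shows "f = (\<Sum>S\<in>Pow {..<n}. (\<lambda>x. fourier n f S * chi n S x))"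
proof
  fix y
  show "f y = (\<Sum>S\<in>Pow {..<n}. (\<lambda>x. fourier n f S * chi n S x)) y"
  proof (cases "y \<in> cube n")
    case False
    then show ?thesis using assms by (simp add: sum_fun_apply chi_def fspace_def)
  next
    case True
    have "(\<Sum>S\<in>Pow {..<n}. (\<lambda>x. fourier n f S * chi n S x)) y
        = (\<Sum>S\<in>Pow {..<n}. \<Sum>x\<in>cube n. f x / 2^n * (chi n S x * chi n S y))"
      by (simp add: sum_fun_apply fourier_def sum_distrib_right sum_divide_distrib mult.assoc)
    also have "\<dots> = (\<Sum>x\<in>cube n. f x / 2^n * (\<Sum>S\<in>Pow {..<n}. chi n S x * chi n S y))"
      by (subst sum.swap) (simp add: sum_distrib_left)
    also have "\<dots> = (\<Sum>x\<in>cube n. if x = y then f y else 0)"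
      by (rule sum.cong[OF refl]) (simp add: kernel_sum True)
    also have "\<dots> = f y" using True finite_cube by simp
    finally show ?thesis by simp
  qed
qed

lemma deg_finite: fixes n :: nat shows "finite ({card S | S. S \<subseteq> {..<n} \<and> P S} \<union> {0})"
proof -
  have "finite {card S | S. S \<subseteq> {..<n} \<and> P S}"
    by (rule finite_subset[of _ "card ` Pow {..<n}"]) auto
  then show ?thesis by simp
qed

lemma deg_ge: "S \<subseteq> {..<n} \<Longrightarrow> fourier n f S \<noteq> 0 \<Longrightarrow> card S \<le> deg n f"
  unfolding deg_def by (rule Max_ge[OF deg_finite]) blast

lemma deg_le: "(\<And>S. S \<subseteq> {..<n} \<Longrightarrow> fourier n f S \<noteq> 0 \<Longrightarrow> card S \<le> d) \<Longrightarrow> deg n f \<le> d"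
  unfolding deg_def by (subst Max_le_iff[OF deg_finite]) auto

lemma chi_inj: "inj_on (chi n) (Pow {..<n})"
proof (rule inj_onI)
  fix S T assume "S \<in> Pow {..<n}" "T \<in> Pow {..<n}" "chi n S = chi n T"
  then have "fourier n (chi n S) S = fourier n (chi n T) S" by simp
  with \<open>S \<in> Pow {..<n}\<close> \<open>T \<in> Pow {..<n}\<close> show "S = T"
    by (simp add: fourier_chi split: if_splits)
qed

lemma fspace_sum: "(\<And>T. T \<in> A \<Longrightarrow> h T \<in> fspace n) \<Longrightarrow> (\<Sum>T\<in>A. (\<lambda>x. c T * h T x)) \<in> fspace n"
  by (auto simp: fspace_def sum_fun_apply)


lemma fourier_comb:
  assumes "finite A" "A \<subseteq> Pow {..<n}" "T' \<subseteq> {..<n}"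
  shows "fourier n (\<Sum>T\<in>A. (\<lambda>x. c T * chi n T x)) T' = (if T' \<in> A then c T' else 0)"
proof -
  have "fourier n (\<Sum>T\<in>A. (\<lambda>x. c T * chi n T x)) T' = (\<Sum>T\<in>A. c T * fourier n (chi n T) T')"
    by (rule fourier_sum)
  also have "\<dots> = (\<Sum>T\<in>A. if T' = T then c T else 0)"
  proof (rule sum.cong[OF refl])
    fix T assume "T \<in> A"
    then have "T \<subseteq> {..<n}" using assms by blast
    then show "c T * fourier n (chi n T) T' = (if T' = T then c T else 0)"
      using fourier_chi[OF assms(3) \<open>T \<subseteq> {..<n}\<close>] by auto
  qed
  also have "\<dots> = (if T' \<in> A then c T' else 0)"
    using assms(1) by (simp add: sum.delta)
  finally show ?thesis .
qed

lemma fourier_zero: "fourier n 0 S = 0"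
  by (simp add: fourier_def)

interpretation fv: vector_space "\<lambda>c (g::(nat\<Rightarrow>real)\<Rightarrow>real) x. c * g x"
  by unfold_locales (auto simp: fun_eq_iff plus_fun_def algebra_simps)

lemma span_le_independent:
  assumes "finite B" "fv.independent C" "C \<subseteq> fv.span B" "card C = card B" "a \<in> fv.span B"
  shows "a \<in> fv.span C"
proof (rule ccontr)
  assume na: "a \<notin> fv.span C"
  then have ind: "fv.independent (insert a C)" using fv.independent_insertI assms(2) by blast
  have sub: "insert a C \<subseteq> fv.span B" using assms by blast
  from fv.independent_span_bound[OF assms(1) ind sub]
  have fin: "finite (insert a C)" and le: "card (insert a C) \<le> card B" by auto
  have "a \<notin> C" using na fv.span_base by blast
  then have "card (insert a C) = card C + 1" using fin by simp
  with le assms(4) show False by simp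
qed

locale bt =
  fixes n :: nat and U :: "((nat \<Rightarrow> real) \<Rightarrow> real) \<Rightarrow> ((nat \<Rightarrow> real) \<Rightarrow> real)"
  assumes bt: "basis_transform n U"
begin

lemma add: "f \<in> fspace n \<Longrightarrow> g \<in> fspace n \<Longrightarrow> U (f + g) = U f + U g"
  using bt unfolding basis_transform_def plus_fun_def by blast

lemma scl: "f \<in> fspace n \<Longrightarrow> U (\<lambda>x. c * f x) = (\<lambda>x. c * U f x)"
  using bt unfolding basis_transform_def by blast

lemma inj: "inj_on U (fspace n)" and img: "U ` fspace n = fspace n"
  using bt unfolding basis_transform_def bij_betw_def by auto

lemma zero_fs: "0 \<in> fspace n" by (simp add: fspace_def)

lemma U0: "U 0 = 0"
proof -
  have "U (\<lambda>x. 0 * (0::(nat\<Rightarrow>real)\<Rightarrow>real) x) = (\<lambda>x. 0 * U 0 x)" by (rule scl[OF zero_fs])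
  then show ?thesis by (simp add: zero_fun_def)
qed

lemma U0': "U (\<lambda>x. 0) = (\<lambda>x. 0)"
  using U0 by (simp add: zero_fun_def)

lemma Usum:
  assumes "\<And>T. T \<in> A \<Longrightarrow> h T \<in> fspace n"
  shows "U (\<Sum>T\<in>A. (\<lambda>x. c T * h T x)) = (\<Sum>T\<in>A. (\<lambda>x. c T * U (h T) x))"
  using assms
proof (induction A rule: infinite_finite_induct)
  case (infinite A) then show ?case by (simp add: U0 U0')
next
  case empty then show ?case by (simp add: U0 U0')
next
  case (insert a A)
  have fa: "(\<lambda>x. c a * h a x) \<in> fspace n" using insert.prems by (auto simp: fspace_def)
  have fA: "(\<Sum>T\<in>A. (\<lambda>x. c T * h T x)) \<in> fspace n" using insert.prems by (intro fspace_sum) auto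
  have IH: "U (\<Sum>T\<in>A. (\<lambda>x. c T * h T x)) = (\<Sum>T\<in>A. (\<lambda>x. c T * U (h T) x))"
    using insert by simp
  have "U (\<Sum>T\<in>insert a A. (\<lambda>x. c T * h T x)) = U ((\<lambda>x. c a * h a x) + (\<Sum>T\<in>A. (\<lambda>x. c T * h T x)))"
    by (simp only: sum.insert[OF insert.hyps])
  also have "\<dots> = U (\<lambda>x. c a * h a x) + U (\<Sum>T\<in>A. (\<lambda>x. c T * h T x))"
    by (rule add[OF fa fA])
  also have "\<dots> = (\<lambda>x. c a * U (h a) x) + (\<Sum>T\<in>A. (\<lambda>x. c T * U (h T) x))"
    by (simp only: IH scl[OF insert.prems[of a]] insertI1)
  also have "\<dots> = (\<Sum>T\<in>insert a A. (\<lambda>x. c T * U (h T) x))"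
    by (simp only: sum.insert[OF insert.hyps])
  finally show ?case .
qed


lemma inv_deg:
  assumes cp: "compatible n U" and S: "S \<subseteq> {..<n}"
  shows "deg n (inv_into (fspace n) U (chi n S)) = card S"
proof -
  have degUchi: "\<And>T. T \<subseteq> {..<n} \<Longrightarrow> deg n (U (chi n T)) = card T"
    using cp unfolding compatible_def by blast
  have Ufs: "\<And>g. g \<in> fspace n \<Longrightarrow> U g \<in> fspace n" using img by blast
  define d where "d = card S"
  define Sd where "Sd = {T. T \<subseteq> {..<n} \<and> card T \<le> d}"
  have Sd_sub: "Sd \<subseteq> Pow {..<n}" unfolding Sd_def by blast
  have finSd: "finite Sd" using Sd_sub finite_subset by blast
  define B where "B = chi n ` Sd"
  define C where "C = U ` B"
  have finB: "finite B" unfolding B_def using finSd by simp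
  have finC: "finite C" unfolding C_def using finB by simp
  have Bfs: "B \<subseteq> fspace n" unfolding B_def using chi_fspace by blast
  have injchi: "inj_on (chi n) Sd" using chi_inj Sd_sub inj_on_subset by blast
  have injUB: "inj_on U B" using inj Bfs inj_on_subset by blast
  have injc: "inj_on (\<lambda>T. U (chi n T)) Sd"
    using comp_inj_on[OF injchi, of U] injUB unfolding B_def comp_def by blast
  have C_eq: "C = (\<lambda>T. U (chi n T)) ` Sd" unfolding C_def B_def by auto
  have reidx: "(\<Sum>v\<in>C. (\<lambda>x. u v * v x)) = U (\<Sum>T\<in>Sd. (\<lambda>x. u (U (chi n T)) * chi n T x))" for u
  proof -
    have "(\<Sum>v\<in>C. (\<lambda>x. u v * v x)) = (\<Sum>T\<in>Sd. (\<lambda>x. u (U (chi n T)) * U (chi n T) x))"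
      unfolding C_eq by (simp add: sum.reindex[OF injc])
    also have "\<dots> = U (\<Sum>T\<in>Sd. (\<lambda>x. u (U (chi n T)) * chi n T x))"
      by (rule Usum[symmetric]) (rule chi_fspace)
    finally show ?thesis .
  qed
  have gfs: "(\<Sum>T\<in>Sd. (\<lambda>x. c T * chi n T x)) \<in> fspace n" for c
    by (rule fspace_sum) (rule chi_fspace)
  have Cind: "fv.independent C"
  proof
    assume "fv.dependent C"
    then obtain u v where v: "v \<in> C" "u v \<noteq> 0" and s0: "(\<Sum>v\<in>C. (\<lambda>x. u v * v x)) = 0"
      using fv.dependent_finite[OF finC] by auto
    define g where "g = (\<Sum>T\<in>Sd. (\<lambda>x. u (U (chi n T)) * chi n T x))"
    have "U g = U 0" using s0 reidx U0 unfolding g_def by simp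
    moreover have "g \<in> fspace n" unfolding g_def by (rule gfs)
    ultimately have g0: "g = 0" using inj_onD[OF inj _ _ zero_fs] by blast
    obtain T0 where T0: "T0 \<in> Sd" "v = U (chi n T0)" using v(1) C_eq by blast
    have "fourier n g T0 = u (U (chi n T0))"
      unfolding g_def using fourier_comb[OF finSd Sd_sub, of T0] T0 Sd_sub by auto
    then show False using g0 fourier_zero v T0 by simp
  qed
  have CspB: "C \<subseteq> fv.span B"
  proof
    fix v assume "v \<in> C"
    then obtain T where T: "T \<in> Sd" "v = U (chi n T)" using C_eq by blast
    have Tn: "T \<subseteq> {..<n}" "card T \<le> d" using T Sd_def by auto
    have vfs: "v \<in> fspace n" using T Ufs chi_fspace by simp
    have "v = (\<Sum>S'\<in>Pow {..<n}. (\<lambda>x. fourier n v S' * chi n S' x))"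
      by (rule expansion[OF vfs])
    also have "\<dots> \<in> fv.span B"
    proof (rule fv.span_sum)
      fix S' assume S': "S' \<in> Pow {..<n}"
      show "(\<lambda>x. fourier n v S' * chi n S' x) \<in> fv.span B"
      proof (cases "fourier n v S' = 0")
        case True
        then have "(\<lambda>x. fourier n v S' * chi n S' x) = 0" by (simp add: zero_fun_def)
        moreover have "(0::(nat\<Rightarrow>real)\<Rightarrow>real) \<in> fv.span B" by (rule fv.span_zero)
        ultimately show ?thesis by (simp only:)
      next
        case False
        have "card S' \<le> deg n v" using deg_ge[OF _ False] S' by blast
        also have "\<dots> = card T" using degUchi[OF Tn(1)] T by simp
        finally have "S' \<in> Sd" using S' Tn unfolding Sd_def by auto
        then have "chi n S' \<in> B" unfolding B_def by blast
        then show ?thesis using fv.span_scale[OF fv.span_base] by blast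
      qed
    qed
    finally show "v \<in> fv.span B" .
  qed
  have cardCB: "card C = card B" unfolding C_def using card_image[OF injUB] .
  have SSd: "S \<in> Sd" using S unfolding Sd_def d_def by auto
  have "chi n S \<in> fv.span B" using SSd unfolding B_def by (intro fv.span_base) blast
  then have "chi n S \<in> fv.span C" using span_le_independent[OF finB Cind CspB cardCB] by blast
  then have "chi n S \<in> range (\<lambda>u. \<Sum>v\<in>C. (\<lambda>x. u v * v x))"
    by (simp only: fv.span_finite[OF finC])
  then obtain u where u: "chi n S = (\<Sum>v\<in>C. (\<lambda>x. u v * v x))"
    by blast
  define g where "g = (\<Sum>T\<in>Sd. (\<lambda>x. u (U (chi n T)) * chi n T x))"
  have Ug: "U g = chi n S" using u reidx unfolding g_def by simp
  have gfs': "g \<in> fspace n" unfolding g_def by (rule gfs)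
  have "inv_into (fspace n) U (U g) = g" by (rule inv_into_f_f[OF inj gfs'])
  then have ginv: "inv_into (fspace n) U (chi n S) = g" by (simp only: Ug)
  have up: "deg n g \<le> d"
  proof (rule deg_le)
    fix T' assume T': "T' \<subseteq> {..<n}" "fourier n g T' \<noteq> 0"
    then have "T' \<in> Sd" unfolding g_def using fourier_comb[OF finSd Sd_sub T'(1)] by (auto split: if_splits)
    then show "card T' \<le> d" unfolding Sd_def by blast
  qed
  have lo: "\<not> deg n g < d"
  proof
    assume lt: "deg n g < d"
    have ge: "g = (\<Sum>T\<in>Pow {..<n}. (\<lambda>x. fourier n g T * chi n T x))" by (rule expansion[OF gfs'])
    have "chi n S = U g" using Ug by (rule sym)
    also have "\<dots> = U (\<Sum>T\<in>Pow {..<n}. (\<lambda>x. fourier n g T * chi n T x))"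
      using ge by (rule arg_cong)
    also have "\<dots> = (\<Sum>T\<in>Pow {..<n}. (\<lambda>x. fourier n g T * U (chi n T) x))"
      by (rule Usum) (rule chi_fspace)
    finally have "fourier n (chi n S) S = fourier n (\<Sum>T\<in>Pow {..<n}. (\<lambda>x. fourier n g T * U (chi n T) x)) S"
      by (rule arg_cong)
    also have "\<dots> = (\<Sum>T\<in>Pow {..<n}. fourier n g T * fourier n (U (chi n T)) S)"
      by (rule fourier_sum)
    also have "\<dots> = 0"
    proof (rule sum.neutral, rule ballI)
      fix T assume T: "T \<in> Pow {..<n}"
      show "fourier n g T * fourier n (U (chi n T)) S = 0"
      proof (cases "fourier n g T = 0")
        case False
        then have "card T < d" using deg_ge[OF _ False] T lt by fastforce
        have "fourier n (U (chi n T)) S = 0"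
        proof (rule ccontr)
          assume "fourier n (U (chi n T)) S \<noteq> 0"
          then have "card S \<le> deg n (U (chi n T))" using deg_ge S by blast
          then show False using degUchi[of T] T \<open>card T < d\<close> d_def by simp
        qed
        then show ?thesis by simp
      qed simp
    qed
    finally show False using fourier_chi[OF S S] by simp
  qed
  show ?thesis using ginv up lo d_def by simp
qed
end


theorem mainTheorem15:
  fixes n :: nat and U :: "((nat \<Rightarrow> real) \<Rightarrow> real) \<Rightarrow> ((nat \<Rightarrow> real) \<Rightarrow> real)"
    and f :: "(nat \<Rightarrow> real) \<Rightarrow> real"
  assumes "basis_transform n U" and "compatible n U" and "f \<in> fspace n"
  shows "degU n U f = deg n f"
proof -
  interpret bt n U by (rule bt.intro) (rule assms(1))
  have eq: "{deg n (inv_into (fspace n) U (chi n S)) | S. S \<subseteq> {..<n} \<and> fourier n f S \<noteq> 0}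
          = {card S | S. S \<subseteq> {..<n} \<and> fourier n f S \<noteq> 0}"
  proof (rule set_eqI, rule iffI)
    fix k assume "k \<in> {deg n (inv_into (fspace n) U (chi n S)) | S. S \<subseteq> {..<n} \<and> fourier n f S \<noteq> 0}"
    then obtain S where S: "k = deg n (inv_into (fspace n) U (chi n S))" "S \<subseteq> {..<n}" "fourier n f S \<noteq> 0" by blast
    then have "k = card S" using inv_deg[OF assms(2) S(2)] by simp
    then show "k \<in> {card S | S. S \<subseteq> {..<n} \<and> fourier n f S \<noteq> 0}" using S(2,3) by blast
  next
    fix k assume "k \<in> {card S | S. S \<subseteq> {..<n} \<and> fourier n f S \<noteq> 0}"
    then obtain S where S: "k = card S" "S \<subseteq> {..<n}" "fourier n f S \<noteq> 0" by blast
    then have "k = deg n (inv_into (fspace n) U (chi n S))" using inv_deg[OF assms(2) S(2)] by simp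
    then show "k \<in> {deg n (inv_into (fspace n) U (chi n S)) | S. S \<subseteq> {..<n} \<and> fourier n f S \<noteq> 0}"
      using S(2,3) by blast
  qed
  show ?thesis unfolding degU_def eq by (simp only: deg_def)
qed

end
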